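(* Fix $0<\theta<1$ and let $P_N(k)=W(N,k)/[N]_\theta!$ for $0\le k\le N-1$. Then: 1. For each fixed integer $j\ge1$, $\lim_{N\to\infty}P_N(N-j)=j\,\theta^{j-1}(1-\theta)$. 2. If $(k_N)$ is any sequence with $0\le k_N\le N-1$ and $N-k_N\to\infty$, then $P_N(k_N)\to0$. 3. The function $g(j)=j\,\theta^{j-1}(1-\theta)$ on real $j\ge1$ attains its maximum at $j^*=\max(-1/\ln\theta,\,1)$. When $1/e<\theta<1$, the maximum value is $g(j^* )=e^{-1}\,\dfrac{\theta-1}{\theta\ln\theta}$.
   Context: Permutations of $\{1,\dots,N\}$ are written in one-line notation; $\mathfrak S_N$ is the set of all of them. An entry $\pi_j$ is a left-to-right maximum if $\pi_j>\pi_i$ for all $i<j$; $\mathrm{inv}(\pi)$ is the number of pairs $i<j$ with $\pi_i>\pi_j$. Definitions: - $[m]_\theta=1+\theta+\cdots+\theta^{m-1}$ and $[m]_\theta!=[1]_\theta\cdots[m]_\theta$; note $[N]_\theta!=\sum_{\pi\in\mathfrak S_N}\theta^{\mathrm{inv}(\pi)}$. - For $0\le k\le N-1$, $\pi\in\mathfrak S_N$ is $k$-winnable if the first index $j>k$ with $\pi_j$ a left-to-right maximum has $\pi_j=N$. - $W(N,k)=\sum_{k\text{-winnable }\pi}\theta^{\mathrm{inv}(\pi)}$. Thus $P_N(k)$ is the probability of winning the best choice game under the Mallows distribution, in which $\pi\in\mathfrak S_N$ has probability $\theta^{\mathrm{inv}(\pi)}/[N]_\theta!$. The game is played with the positional strategy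 that rejects the first $k$ candidates and accepts the next left-to-right maximum; winning means the accepted candidate $i$ has $\pi_i=N$. *)

theory Defs
  imports "HOL-Analysis.Analysis" "HOL-Combinatorics.Multiset_Permutations"
begin

text \<open>Permutations of {1..N} in one-line notation are lists; list positions are 0-based,
  so the paper's position j (1-based) is list index j-1.\<close>

definition inversions :: "nat list \<Rightarrow> nat" where
  "inversions xs = card {(i, j). i < j \<and> j < length xs \<and> xs ! i > xs ! j}"

definition ltr_max :: "nat list \<Rightarrow> nat \<Rightarrow> bool" where
  "ltr_max xs j \<longleftrightarrow> j < length xs \<and> (\<forall>i<j. xs ! i < xs ! j)"

text \<open>k-winnable: the first (1-based) index j > k, i.e. 0-based index j >= k, at which a
  left-to-right maximum occurs exists and carries the value N.\<close>
definition winnable :: "nat \<Rightarrow> nat \<Rightarrow> nat list \<Rightarrow> bool" where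
  "winnable N k xs \<longleftrightarrow>
     (\<exists>j. k \<le> j \<and> ltr_max xs j \<and> xs ! j = N \<and>
          (\<forall>j'. k \<le> j' \<and> j' < j \<longrightarrow> \<not> ltr_max xs j'))"

definition W :: "real \<Rightarrow> nat \<Rightarrow> nat \<Rightarrow> real" where
  "W \<theta> N k = (\<Sum>xs\<in>{xs \<in> permutations_of_set {1..N}. winnable N k xs}. \<theta> ^ inversions xs)"

definition qint :: "real \<Rightarrow> nat \<Rightarrow> real" where
  "qint \<theta> m = (\<Sum>i<m. \<theta> ^ i)"

definition qfact :: "real \<Rightarrow> nat \<Rightarrow> real" where
  "qfact \<theta> N = (\<Prod>m=1..N. qint \<theta> m)"

definition P :: "real \<Rightarrow> nat \<Rightarrow> nat \<Rightarrow> real" where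
  "P \<theta> N k = W \<theta> N k / qfact \<theta> N"

end

theory Submission
  imports Defs
begin


lemma snoc_sum:
  fixes h :: "nat list \<Rightarrow> real"
  assumes "finite S" "S \<noteq> {}"
  shows "(\<Sum>xs\<in>permutations_of_set S. h xs) =
         (\<Sum>a\<in>S. \<Sum>ys\<in>permutations_of_set (S - {a}). h (ys @ [a]))"
proof -
  have sub: "last ` permutations_of_set S \<subseteq> S"
  proof
    fix x assume "x \<in> last ` permutations_of_set S"
    then obtain xs where xs: "xs \<in> permutations_of_set S" "x = last xs" by auto
    have "xs \<noteq> []" using xs assms by (auto simp: permutations_of_set_def)
    then show "x \<in> S" using xs by (auto simp: permutations_of_set_def)
  qed
  have eq: "{xs \<in> permutations_of_set S. last xs = a} = (\<lambda>ys. ys @ [a]) ` permutations_of_set (S - {a})"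
    if a: "a \<in> S" for a
  proof (intro set_eqI iffI)
    fix xs assume "xs \<in> {xs \<in> permutations_of_set S. last xs = a}"
    then have xs: "set xs = S" "distinct xs" "last xs = a" by (auto simp: permutations_of_set_def)
    have ne: "xs \<noteq> []" using xs assms by auto
    define ys where "ys = butlast xs"
    have d: "xs = ys @ [a]" unfolding ys_def
      by (subst xs(3)[symmetric]) (rule append_butlast_last_id[OF ne, symmetric])
    have dy: "distinct ys" "a \<notin> set ys" using xs(2) unfolding d by simp_all
    have sy: "S = insert a (set ys)" using xs(1) unfolding d by simp
    have "set ys = S - {a}" using dy(2) sy by blast
    then have "ys \<in> permutations_of_set (S - {a})"
      using dy by (simp add: permutations_of_set_def)
    then show "xs \<in> (\<lambda>ys. ys @ [a]) ` permutations_of_set (S - {a})" unfolding d by (rule imageI)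
  next
    fix xs assume "xs \<in> (\<lambda>ys. ys @ [a]) ` permutations_of_set (S - {a})"
    then obtain ys where ys: "ys \<in> permutations_of_set (S - {a})" and d: "xs = ys @ [a]" by blast
    have "set xs = S" using ys a unfolding d by (auto simp: permutations_of_set_def)
    moreover have "distinct xs" using ys unfolding d by (auto simp: permutations_of_set_def)
    ultimately show "xs \<in> {xs \<in> permutations_of_set S. last xs = a}"
      unfolding d by (simp add: permutations_of_set_def)
  qed
  have "(\<Sum>xs\<in>permutations_of_set S. h xs) = (\<Sum>a\<in>S. \<Sum>xs\<in>{xs \<in> permutations_of_set S. last xs = a}. h xs)"
    using sum.group[OF finite_permutations_of_set assms(1) sub, of h] by simp
  also have "\<dots> = (\<Sum>a\<in>S. \<Sum>ys\<in>permutations_of_set (S - {a}). h (ys @ [a]))"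
  proof (rule sum.cong[OF refl])
    fix a assume a: "a \<in> S"
    show "(\<Sum>xs\<in>{xs \<in> permutations_of_set S. last xs = a}. h xs) = (\<Sum>ys\<in>permutations_of_set (S - {a}). h (ys @ [a]))"
      unfolding eq[OF a] by (subst sum.reindex) (auto simp: inj_on_def)
  qed
  finally show ?thesis .
qed

lemma inversions_snoc:
  assumes "distinct (ys @ [a])"
  shows "inversions (ys @ [a]) = inversions ys + card {s \<in> set ys. s > a}"
proof -
  let ?n = "length ys"
  have split: "{(i, j). i < j \<and> j < length (ys @ [a]) \<and> (ys @ [a]) ! i > (ys @ [a]) ! j}
     = {(i, j). i < j \<and> j < ?n \<and> ys ! i > ys ! j} \<union> (\<lambda>i. (i, ?n)) ` {i. i < ?n \<and> ys ! i > a}"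
    by (auto simp: nth_append less_Suc_eq)
  have fin1: "finite {(i, j). i < j \<and> j < ?n \<and> ys ! i > ys ! j}"
    by (rule finite_subset[of _ "{..<?n} \<times> {..<?n}"]) auto
  have disj: "{(i, j). i < j \<and> j < ?n \<and> ys ! i > ys ! j} \<inter> (\<lambda>i. (i, ?n)) ` {i. i < ?n \<and> ys ! i > a} = {}"
    by auto
  have c2: "card ((\<lambda>i. (i, ?n)) ` {i. i < ?n \<and> ys ! i > a}) = card {i. i < ?n \<and> ys ! i > a}"
    by (rule card_image) (auto simp: inj_on_def)
  have "bij_betw ((!) ys) {i. i < ?n \<and> ys ! i > a} {s \<in> set ys. s > a}"
  proof -
    have b: "bij_betw ((!) ys) {..<?n} (set ys)" using assms by (intro bij_betw_nth) auto
    have "{s \<in> set ys. s > a} = (!) ys ` {i. i < ?n \<and> ys ! i > a}"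
      by (auto simp: in_set_conv_nth)
    moreover have "inj_on ((!) ys) {i. i < ?n \<and> ys ! i > a}"
      using b by (auto simp: bij_betw_def inj_on_def)
    ultimately show ?thesis by (simp add: bij_betw_def)
  qed
  then have c3: "card {i. i < ?n \<and> ys ! i > a} = card {s \<in> set ys. s > a}"
    by (rule bij_betw_same_card)
  show ?thesis unfolding inversions_def split
    by (subst card_Un_disjoint) (use fin1 disj c2 c3 in auto)
qed

definition L :: "nat list \<Rightarrow> nat \<Rightarrow> nat" where
  "L xs k = card {j. k \<le> j \<and> ltr_max xs j}"

lemma L_snoc:
  assumes "distinct (ys @ [a])"
  shows "L (ys @ [a]) k = L ys k + (if k \<le> length ys \<and> a = Max (insert a (set ys)) then 1 else 0)"
proof -
  have lt: "ltr_max (ys @ [a]) j \<longleftrightarrow> ltr_max ys j" if "j < length ys" for j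
    using that by (auto simp: ltr_max_def nth_append)
  have last: "ltr_max (ys @ [a]) (length ys) \<longleftrightarrow> a = Max (insert a (set ys))"
  proof -
    have "ltr_max (ys @ [a]) (length ys) \<longleftrightarrow> (\<forall>s\<in>set ys. s < a)"
      using nth_mem by (fastforce simp: ltr_max_def nth_append in_set_conv_nth)
    also have "\<dots> \<longleftrightarrow> a = Max (insert a (set ys))"
    proof
      assume "\<forall>s\<in>set ys. s < a" thus "a = Max (insert a (set ys))"
        by (intro Max_eqI[symmetric]) auto
    next
      assume m: "a = Max (insert a (set ys))"
      show "\<forall>s\<in>set ys. s < a"
      proof
        fix s assume s: "s \<in> set ys"
        have "s \<le> a" using m s by (metis Max_ge finite_insert finite_set insertCI)
        moreover have "s \<noteq> a" using s assms by auto
        ultimately show "s < a" by simp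
      qed
    qed
    finally show ?thesis .
  qed
  have fin: "finite {j. k \<le> j \<and> ltr_max ys j}"
    by (rule finite_subset[of _ "{..<length ys}"]) (auto simp: ltr_max_def)
  have set: "{j. k \<le> j \<and> ltr_max (ys @ [a]) j} = {j. k \<le> j \<and> ltr_max ys j} \<union>
     (if k \<le> length ys \<and> a = Max (insert a (set ys)) then {length ys} else {})"
    using lt last by (auto simp: ltr_max_def less_Suc_eq)
  have nin: "length ys \<notin> {j. k \<le> j \<and> ltr_max ys j}" by (simp add: ltr_max_def)
  show ?thesis unfolding L_def set
    using fin nin by (cases "k \<le> length ys \<and> a = Max (insert a (set ys))") simp_all
qed




definition cS :: "nat set \<Rightarrow> nat \<Rightarrow> nat" where
  "cS S a = card {s \<in> S. a < s}"

lemma qint_Suc: "qint \<theta> (Suc n) = 1 + \<theta> * qint \<theta> n"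
  unfolding qint_def sum.lessThan_Suc_shift by (simp add: sum_distrib_left)

lemma qfact_Suc: "qfact \<theta> (Suc n) = qint \<theta> (Suc n) * qfact \<theta> n"
  unfolding qfact_def by (simp add: prod.cl_ivl_Suc)

lemma cnt_sum:
  "finite S \<Longrightarrow> (\<Sum>a\<in>S. \<theta> ^ cS S a) = qint \<theta> (card S)"
proof (induction "card S" arbitrary: S)
  case 0
  then show ?case by (simp add: qint_def)
next
  case (Suc n)
  then have ne: "S \<noteq> {}" by auto
  define M where "M = Max S"
  have M: "M \<in> S" using ne Suc.prems unfolding M_def by simp
  have cn: "card (S - {M}) = n" using Suc.hyps(2) M Suc.prems by simp
  have IH: "(\<Sum>a\<in>S - {M}. \<theta> ^ cS (S - {M}) a) = qint \<theta> n"
    using Suc.hyps(1)[of "S - {M}"] cn Suc.prems by simp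
  have cM: "cS S M = 0" unfolding cS_def M_def using Suc.prems
    by (simp add: card_eq_0_iff) (meson Max_ge not_le)
  have ca: "cS S a = Suc (cS (S - {M}) a)" if a: "a \<in> S - {M}" for a
  proof -
    have "a < M" using a Suc.prems unfolding M_def by (simp add: order.not_eq_order_implies_strict)
    then have "{s \<in> S. a < s} = insert M {s \<in> S - {M}. a < s}" using M by auto
    then show ?thesis unfolding cS_def using Suc.prems by simp
  qed
  have "(\<Sum>a\<in>S. \<theta> ^ cS S a) = \<theta> ^ cS S M + (\<Sum>a\<in>S - {M}. \<theta> ^ cS S a)"
    by (rule sum.remove[OF Suc.prems M])
  also have "(\<Sum>a\<in>S - {M}. \<theta> ^ cS S a) = (\<Sum>a\<in>S - {M}. \<theta> * \<theta> ^ cS (S - {M}) a)"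
    by (rule sum.cong) (simp_all add: ca)
  also have "\<dots> = \<theta> * qint \<theta> n" unfolding sum_distrib_left[symmetric] IH ..
  finally show ?case using cM unfolding Suc.hyps(2)[symmetric] by (simp add: qint_Suc)
qed

lemma split_sum:
  assumes "finite S" "S \<noteq> {}"
  shows "(\<Sum>a\<in>S. \<theta> ^ cS S a * (if a = Max S then X else Y)) = X + (qint \<theta> (card S) - 1) * Y"
proof -
  let ?M = "Max S"
  have M: "?M \<in> S" using assms by simp
  have cM: "cS S ?M = 0" unfolding cS_def using assms
    by (simp add: card_eq_0_iff) blast
  have r: "(\<Sum>a\<in>S. \<theta> ^ cS S a) = 1 + (\<Sum>a\<in>S - {?M}. \<theta> ^ cS S a)"
    using sum.remove[OF assms(1) M, of "\<lambda>a. \<theta> ^ cS S a"] cM by simp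
  have "(\<Sum>a\<in>S. \<theta> ^ cS S a * (if a = Max S then X else Y)) =
        X + (\<Sum>a\<in>S - {?M}. \<theta> ^ cS S a * Y)"
  proof -
    have e: "(\<Sum>a\<in>S - {?M}. \<theta> ^ cS S a * (if a = ?M then X else Y)) = (\<Sum>a\<in>S - {?M}. \<theta> ^ cS S a * Y)"
      by (rule sum.cong) auto
    show ?thesis unfolding sum.remove[OF assms(1) M] e using cM by simp
  qed
  also have "(\<Sum>a\<in>S - {?M}. \<theta> ^ cS S a * Y) = ((\<Sum>a\<in>S. \<theta> ^ cS S a) - 1) * Y"
    unfolding sum_distrib_right[symmetric] r by simp
  finally show ?thesis using cnt_sum[OF assms(1)] by simp
qed

definition SS :: "real \<Rightarrow> nat \<Rightarrow> (nat \<Rightarrow> bool) \<Rightarrow> nat set \<Rightarrow> real" where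
  "SS \<theta> k \<Phi> S = (\<Sum>xs\<in>permutations_of_set S. if \<Phi> (L xs k) then \<theta> ^ inversions xs else 0)"

lemma SS_step:
  assumes "finite S" "card S = Suc n"
  shows "SS \<theta> k \<Phi> S = (\<Sum>a\<in>S. \<theta> ^ cS S a *
            SS \<theta> k (\<lambda>l. \<Phi> (l + (if k \<le> n \<and> a = Max S then 1 else 0))) (S - {a}))"
proof -
  have ne: "S \<noteq> {}" using assms by auto
  show ?thesis
    unfolding SS_def snoc_sum[OF assms(1) ne]
  proof (rule sum.cong[OF refl])
    fix a assume a: "a \<in> S"
    show "(\<Sum>ys\<in>permutations_of_set (S - {a}). if \<Phi> (L (ys @ [a]) k) then \<theta> ^ inversions (ys @ [a]) else 0) =
          \<theta> ^ cS S a * (\<Sum>xs\<in>permutations_of_set (S - {a}).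
             if \<Phi> (L xs k + (if k \<le> n \<and> a = Max S then 1 else 0)) then \<theta> ^ inversions xs else 0)"
      unfolding sum_distrib_left
    proof (rule sum.cong[OF refl])
      fix ys assume ys: "ys \<in> permutations_of_set (S - {a})"
      then have sy: "set ys = S - {a}" and dy: "distinct ys" by (auto simp: permutations_of_set_def)
      have d: "distinct (ys @ [a])" using sy dy by simp
      have ins: "insert a (set ys) = S" using sy a by auto
      have cd: "card (S - {a}) = n" using assms a by simp
      have len: "length ys = n" using distinct_card[OF dy] sy cd by simp
      have cc: "{s \<in> set ys. a < s} = {s \<in> S. a < s}" using sy by auto
      show "(if \<Phi> (L (ys @ [a]) k) then \<theta> ^ inversions (ys @ [a]) else 0) =
            \<theta> ^ cS S a * (if \<Phi> (L ys k + (if k \<le> n \<and> a = Max S then 1 else 0)) then \<theta> ^ inversions ys else 0)"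
        unfolding L_snoc[OF d] inversions_snoc[OF d] ins len cc cS_def
        by (simp add: power_add)
    qed
  qed
qed

lemma L_short: "length xs \<le> k \<Longrightarrow> L xs k = 0"
  unfolding L_def ltr_max_def by auto

lemma SS_short:
  assumes "card S \<le> k"
  shows "SS \<theta> k \<Phi> S = (if \<Phi> 0 then SS \<theta> k (\<lambda>_. True) S else 0)"
proof -
  have "L xs k = 0" if "xs \<in> permutations_of_set S" for xs
    using that assms by (intro L_short) (simp add: length_finite_permutations_of_set)
  then show ?thesis unfolding SS_def by (auto intro!: sum.cong)
qed

lemma SS_False: "SS \<theta> k (\<lambda>_. False) S = 0"
  unfolding SS_def by simp

fun fa :: "real \<Rightarrow> nat \<Rightarrow> nat \<Rightarrow> real" where
  "fa \<theta> k 0 = 1"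
| "fa \<theta> k (Suc n) = (if Suc n \<le> k then qfact \<theta> (Suc n) else (qint \<theta> (Suc n) - 1) * fa \<theta> k n)"

fun fb :: "real \<Rightarrow> nat \<Rightarrow> nat \<Rightarrow> real" where
  "fb \<theta> k 0 = 0"
| "fb \<theta> k (Suc n) = (if Suc n \<le> k then 0 else (qint \<theta> (Suc n) - 1) * fb \<theta> k n + fa \<theta> k n)"

lemma SS_main:
  "finite S \<Longrightarrow> SS \<theta> k (\<lambda>_. True) S = qfact \<theta> (card S) \<and>
     SS \<theta> k (\<lambda>l. l = 0) S = fa \<theta> k (card S) \<and>
     SS \<theta> k (\<lambda>l. l = 1) S = fb \<theta> k (card S)"
proof (induction "card S" arbitrary: S)
  case 0
  then have "S = {}" by simp
  then show ?case by (simp add: SS_def L_def ltr_max_def qfact_def inversions_def)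
next
  case (Suc n)
  have ne: "S \<noteq> {}" using Suc.hyps(2) by auto
  have IH: "SS \<theta> k (\<lambda>_. True) (S - {a}) = qfact \<theta> n \<and>
     SS \<theta> k (\<lambda>l. l = 0) (S - {a}) = fa \<theta> k n \<and>
     SS \<theta> k (\<lambda>l. l = 1) (S - {a}) = fb \<theta> k n" if "a \<in> S" for a
  proof -
    have c: "n = card (S - {a})" using Suc.hyps(2) Suc.prems that by simp
    have "finite (S - {a})" using Suc.prems by simp
    from Suc.hyps(1)[OF c this] show ?thesis unfolding c[symmetric] .
  qed
  have IHQ: "\<And>a. a \<in> S \<Longrightarrow> SS \<theta> k (\<lambda>_. True) (S - {a}) = qfact \<theta> n" using IH by blast
  have IHA: "\<And>a. a \<in> S \<Longrightarrow> SS \<theta> k (\<lambda>l. l = 0) (S - {a}) = fa \<theta> k n" using IH by blast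
  have IHB: "\<And>a. a \<in> S \<Longrightarrow> SS \<theta> k (\<lambda>l. l = 1) (S - {a}) = fb \<theta> k n" using IH by blast
  have MS: "Max S \<in> S" using ne Suc.prems by simp
  have Q: "SS \<theta> k (\<lambda>_. True) S = qfact \<theta> (Suc n)"
  proof -
    have "SS \<theta> k (\<lambda>_. True) S = (\<Sum>a\<in>S. \<theta> ^ cS S a * qfact \<theta> n)"
      unfolding SS_step[OF Suc.prems Suc.hyps(2)[symmetric]]
      by (rule sum.cong) (simp_all add: IHQ)
    also have "\<dots> = qint \<theta> (Suc n) * qfact \<theta> n"
      unfolding sum_distrib_right[symmetric] cnt_sum[OF Suc.prems] Suc.hyps(2) ..
    finally show ?thesis by (simp add: qfact_Suc)
  qed
  show ?case
  proof (cases "Suc n \<le> k")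
    case True
    have sh: "card S \<le> k" using True Suc.hyps(2) by simp
    have "SS \<theta> k (\<lambda>l. l = 0) S = qfact \<theta> (Suc n)"
      using SS_short[OF sh, of \<theta> "\<lambda>l. l = 0"] Q by simp
    moreover have "SS \<theta> k (\<lambda>l. l = 1) S = 0"
      using SS_short[OF sh, of \<theta> "\<lambda>l. l = 1"] by simp
    ultimately show ?thesis using Q True unfolding Suc.hyps(2)[symmetric] by simp
  next
    case False
    then have kn: "k \<le> n" by simp
    have A: "SS \<theta> k (\<lambda>l. l = 0) S = (\<Sum>a\<in>S. \<theta> ^ cS S a * (if a = Max S then 0 else fa \<theta> k n))"
      unfolding SS_step[OF Suc.prems Suc.hyps(2)[symmetric]]
      by (rule sum.cong) (simp_all add: IHA kn SS_False)
    have B: "SS \<theta> k (\<lambda>l. l = 1) S = (\<Sum>a\<in>S. \<theta> ^ cS S a * (if a = Max S then fa \<theta> k n else fb \<theta> k n))"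
      unfolding SS_step[OF Suc.prems Suc.hyps(2)[symmetric]]
    proof (rule sum.cong[OF refl])
      fix a assume a: "a \<in> S"
      show "\<theta> ^ cS S a * SS \<theta> k (\<lambda>l. l + (if k \<le> n \<and> a = Max S then 1 else 0) = 1) (S - {a}) =
            \<theta> ^ cS S a * (if a = Max S then fa \<theta> k n else fb \<theta> k n)"
      proof (cases "a = Max S")
        case True
        have "(\<lambda>l. l + (if k \<le> n \<and> a = Max S then 1 else 0) = (1::nat)) = (\<lambda>l. l = 0)"
          using True kn by auto
        then show ?thesis using IHA[OF a] True by simp
      next
        case False
        have "(\<lambda>l. l + (if k \<le> n \<and> a = Max S then 1 else 0) = (1::nat)) = (\<lambda>l. l = 1)"
          using False by auto
        then show ?thesis using IHB[OF a] False by simp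
      qed
    qed
    have A': "SS \<theta> k (\<lambda>l. l = 0) S = (qint \<theta> (Suc n) - 1) * fa \<theta> k n"
      unfolding A split_sum[OF Suc.prems ne] Suc.hyps(2)[symmetric] by simp
    have B': "SS \<theta> k (\<lambda>l. l = 1) S = fa \<theta> k n + (qint \<theta> (Suc n) - 1) * fb \<theta> k n"
      unfolding B split_sum[OF Suc.prems ne] Suc.hyps(2)[symmetric] by simp
    show ?thesis
      using Q A' B' False unfolding Suc.hyps(2)[symmetric] by simp
  qed
qed




lemma winnable_iff:
  assumes xs: "xs \<in> permutations_of_set {1..N}"
  shows "winnable N k xs \<longleftrightarrow> L xs k = 1"
proof -
  have sx: "set xs = {1..N}" and dx: "distinct xs" using xs by (auto simp: permutations_of_set_def)
  have le: "xs ! i \<le> N" if "i < length xs" for i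
    using that sx nth_mem by fastforce
  have fin: "finite {j. k \<le> j \<and> ltr_max xs j}"
    by (rule finite_subset[of _ "{..<length xs}"]) (auto simp: ltr_max_def)
  show ?thesis
  proof
    assume "winnable N k xs"
    then obtain j where j: "k \<le> j" "ltr_max xs j" "xs ! j = N"
      and nj: "\<And>j'. k \<le> j' \<Longrightarrow> j' < j \<Longrightarrow> \<not> ltr_max xs j'"
      unfolding winnable_def by blast
    have "{j. k \<le> j \<and> ltr_max xs j} = {j}"
    proof (intro set_eqI iffI)
      fix j' assume j': "j' \<in> {j. k \<le> j \<and> ltr_max xs j}"
      have "\<not> j < j'"
      proof
        assume "j < j'"
        then have "xs ! j < xs ! j'" using j' by (auto simp: ltr_max_def)
        moreover have "xs ! j' \<le> N" using j' le by (auto simp: ltr_max_def)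
        ultimately show False using j(3) by simp
      qed
      moreover have "\<not> j' < j" using nj j' by auto
      ultimately show "j' \<in> {j}" by simp
    next
      fix j' assume "j' \<in> {j}" then show "j' \<in> {j. k \<le> j \<and> ltr_max xs j}" using j by simp
    qed
    then show "L xs k = 1" unfolding L_def by simp
  next
    assume "L xs k = 1"
    then obtain j where jset: "{j. k \<le> j \<and> ltr_max xs j} = {j}"
      unfolding L_def using card_1_singletonE by blast
    then have j: "k \<le> j" "ltr_max xs j" by auto
    then have "xs \<noteq> []" by (auto simp: ltr_max_def)
    then have "N \<in> set xs" using sx by (cases "N = 0") auto
    then obtain p where p: "p < length xs" "xs ! p = N" by (auto simp: in_set_conv_nth)
    have lp: "ltr_max xs p"
      unfolding ltr_max_def
    proof (intro conjI allI impI)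
      show "p < length xs" by fact
      fix i assume i: "i < p"
      have "xs ! i \<le> N" using le i p by simp
      have il: "i < length xs" using i p by simp
      have "xs ! i \<noteq> xs ! p" using nth_eq_iff_index_eq[OF dx il p(1)] i by simp
      moreover note \<open>xs ! i \<le> N\<close>
      ultimately show "xs ! i < xs ! p" using p by simp
    qed
    show "winnable N k xs"
    proof (cases "k \<le> p")
      case True
      then have "p = j" using jset lp by auto
      then show ?thesis unfolding winnable_def using j p jset
        by (intro exI[of _ j]) auto
    next
      case False
      then have "p < j" using j by simp
      then have "xs ! p < xs ! j" using j by (auto simp: ltr_max_def)
      moreover have "xs ! j \<le> N" using j le by (auto simp: ltr_max_def)
      ultimately show ?thesis using p by simp
    qed
  qed
qed

lemma W_eq: "W \<theta> N k = fb \<theta> k N"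
proof -
  have "W \<theta> N k = (\<Sum>xs\<in>permutations_of_set {1..N}. if winnable N k xs then \<theta> ^ inversions xs else 0)"
    unfolding W_def by (rule sum.inter_filter) simp
  also have "\<dots> = SS \<theta> k (\<lambda>l. l = 1) {1..N}"
    unfolding SS_def by (rule sum.cong) (simp_all add: winnable_iff)
  also have "\<dots> = fb \<theta> k N" using SS_main[of "{1..N}" \<theta> k] by simp
  finally show ?thesis .
qed

lemma P_eq: "P \<theta> N k = fb \<theta> k N / qfact \<theta> N"
  unfolding P_def W_eq ..




definition ra :: "real \<Rightarrow> nat \<Rightarrow> nat \<Rightarrow> real" where
  "ra \<theta> k n = fa \<theta> k n / qfact \<theta> n"
definition rb :: "real \<Rightarrow> nat \<Rightarrow> nat \<Rightarrow> real" where
  "rb \<theta> k n = fb \<theta> k n / qfact \<theta> n"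

lemma qint_nonneg: "0 \<le> \<theta> \<Longrightarrow> 0 \<le> qint \<theta> n"
  unfolding qint_def by (simp add: sum_nonneg)

lemma qint_ge1: "0 \<le> \<theta> \<Longrightarrow> 1 \<le> qint \<theta> (Suc m)"
  using qint_nonneg[of \<theta> m] by (simp add: qint_Suc)

lemma qint_mono: "0 \<le> \<theta> \<Longrightarrow> qint \<theta> m \<le> qint \<theta> (Suc m)"
  unfolding qint_def by simp

lemma qfact_pos: "0 \<le> \<theta> \<Longrightarrow> 0 < qfact \<theta> n"
proof (induction n)
  case 0 then show ?case by (simp add: qfact_def)
next
  case (Suc n) then show ?case using qint_ge1[of \<theta> n] by (simp add: qfact_Suc)
qed

lemma qint_closed: "\<theta> \<noteq> 1 \<Longrightarrow> qint \<theta> n = (1 - \<theta> ^ n) / (1 - \<theta>)"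
  unfolding qint_def by (simp add: sum_gp_strict)

definition tq :: "real \<Rightarrow> nat \<Rightarrow> real" where
  "tq \<theta> n = (qint \<theta> n - 1) / qint \<theta> n"

lemma tq_bounds: "0 \<le> \<theta> \<Longrightarrow> 0 \<le> tq \<theta> (Suc m) \<and> tq \<theta> (Suc m) \<le> \<theta>"
proof -
  assume t: "0 \<le> \<theta>"
  have q1: "1 \<le> qint \<theta> (Suc m)" using qint_ge1[OF t] .
  define r where "r = qint \<theta> m / qint \<theta> (Suc m)"
  have e: "tq \<theta> (Suc m) = \<theta> * r"
    unfolding tq_def r_def by (simp add: qint_Suc)
  have "r \<le> 1" unfolding r_def using q1 qint_mono[OF t, of m] by simp
  moreover have r0: "0 \<le> r" unfolding r_def using q1 qint_nonneg[OF t, of m] by simp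
  ultimately have "\<theta> * r \<le> \<theta> * 1" using t by (intro mult_left_mono)
  then show ?thesis unfolding e using t r0 by simp
qed

lemma u_bounds: "0 \<le> \<theta> \<Longrightarrow> 0 < 1 / qint \<theta> (Suc m) \<and> 1 / qint \<theta> (Suc m) \<le> 1"
  using qint_ge1[of \<theta> m] by simp

lemma ra_Suc: "0 \<le> \<theta> \<Longrightarrow> k \<le> m \<Longrightarrow> ra \<theta> k (Suc m) = tq \<theta> (Suc m) * ra \<theta> k m"
  using qfact_pos[of \<theta> m] qint_ge1[of \<theta> m]
  unfolding ra_def tq_def by (simp add: qfact_Suc)

lemma rb_Suc: "0 \<le> \<theta> \<Longrightarrow> k \<le> m \<Longrightarrow>
   rb \<theta> k (Suc m) = tq \<theta> (Suc m) * rb \<theta> k m + ra \<theta> k m * (1 / qint \<theta> (Suc m))"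
  using qfact_pos[of \<theta> m] qint_ge1[of \<theta> m]
  unfolding ra_def rb_def tq_def by (simp add: qfact_Suc field_simps)

lemma fa_self: "fa \<theta> k k = qfact \<theta> k"
  by (cases k) (simp_all add: qfact_def)

lemma ra_self: "0 \<le> \<theta> \<Longrightarrow> ra \<theta> k k = 1"
  using qfact_pos[of \<theta> k] unfolding ra_def fa_self by simp

lemma rb_self: "rb \<theta> k k = 0"
  unfolding rb_def by (cases k) simp_all

lemma bounds:
  assumes "0 < \<theta>" "\<theta> < 1"
  shows "0 \<le> ra \<theta> k (k + i) \<and> ra \<theta> k (k + i) \<le> \<theta> ^ i \<and>
         0 \<le> rb \<theta> k (k + i) \<and> rb \<theta> k (k + i) \<le> real i * \<theta> ^ i / \<theta>"
proof (induction i)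
  case 0
  then show ?case using assms by (simp add: ra_self rb_self)
next
  case (Suc i)
  have t0: "0 \<le> \<theta>" using assms by simp
  have kk: "k \<le> k + i" by simp
  obtain tb where tb: "0 \<le> tq \<theta> (Suc (k + i))" "tq \<theta> (Suc (k + i)) \<le> \<theta>" using tq_bounds[OF t0] by blast
  obtain ub where ub: "0 < 1 / qint \<theta> (Suc (k + i))" "1 / qint \<theta> (Suc (k + i)) \<le> 1" using u_bounds[OF t0] by blast
  let ?t = "tq \<theta> (Suc (k + i))" and ?u = "1 / qint \<theta> (Suc (k + i))"
  let ?a = "ra \<theta> k (k + i)" and ?b = "rb \<theta> k (k + i)"
  have ea: "ra \<theta> k (k + Suc i) = ?t * ?a" using ra_Suc[OF t0 kk] by simp
  have eb: "rb \<theta> k (k + Suc i) = ?t * ?b + ?a * ?u" using rb_Suc[OF t0 kk] by simp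
  have a1: "?t * ?a \<le> \<theta> * \<theta> ^ i" using Suc.IH tb by (intro mult_mono) auto
  have b1: "?t * ?b \<le> \<theta> * (real i * \<theta> ^ i / \<theta>)" using Suc.IH tb by (intro mult_mono) auto
  have b2: "?a * ?u \<le> \<theta> ^ i * 1" using Suc.IH ub by (intro mult_mono) auto
  have "\<theta> * (real i * \<theta> ^ i / \<theta>) + \<theta> ^ i * 1 = real (Suc i) * \<theta> ^ Suc i / \<theta>"
    using assms by (simp add: field_simps)
  then show ?case unfolding ea eb using Suc.IH tb ub a1 b1 b2
    by (auto intro!: mult_nonneg_nonneg add_nonneg_nonneg)
qed

lemma limits:
  assumes "0 < \<theta>" "\<theta> < 1"
  shows "(\<lambda>k. ra \<theta> k (k + i)) \<longlonglongrightarrow> \<theta> ^ i \<and>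
         (\<lambda>k. rb \<theta> k (k + i)) \<longlonglongrightarrow> real i * \<theta> ^ i / \<theta> * (1 - \<theta>)"
proof (induction i)
  case 0
  then show ?case using assms by (simp add: ra_self rb_self)
next
  case (Suc i)
  have t0: "0 \<le> \<theta>" using assms by simp
  have p0: "(\<lambda>k. \<theta> ^ (k + Suc i)) \<longlonglongrightarrow> 0"
    by (rule LIMSEQ_ignore_initial_segment) (use assms in \<open>auto intro!: LIMSEQ_power_zero\<close>)
  have uq: "1 / qint \<theta> (Suc (k + i)) = (1 - \<theta>) / (1 - \<theta> ^ (k + Suc i))" for k
    using assms by (simp add: qint_closed)
  have ul: "(\<lambda>k. 1 / qint \<theta> (Suc (k + i))) \<longlonglongrightarrow> 1 - \<theta>"
  proof -
    have "(\<lambda>k. (1 - \<theta>) / (1 - \<theta> ^ (k + Suc i))) \<longlonglongrightarrow> (1 - \<theta>) / (1 - 0)"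
      by (rule tendsto_divide tendsto_diff tendsto_const p0)+ simp
    then show ?thesis unfolding uq by simp
  qed
  have tq: "tq \<theta> n = 1 - 1 / qint \<theta> n" if "n \<ge> 1" for n
    using qint_ge1[OF t0, of "n - 1"] that unfolding tq_def by (simp add: field_simps)
  have tl: "(\<lambda>k. tq \<theta> (Suc (k + i))) \<longlonglongrightarrow> \<theta>"
    using tendsto_diff[OF tendsto_const[of 1] ul] by (subst tq) auto
  have ea: "ra \<theta> k (k + Suc i) = tq \<theta> (Suc (k + i)) * ra \<theta> k (k + i)" for k
    using ra_Suc[OF t0, of k "k + i"] by simp
  have eb: "rb \<theta> k (k + Suc i) = tq \<theta> (Suc (k + i)) * rb \<theta> k (k + i) + ra \<theta> k (k + i) * (1 / qint \<theta> (Suc (k + i)))" for k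
    using rb_Suc[OF t0, of k "k + i"] by simp
  have "(\<lambda>k. ra \<theta> k (k + Suc i)) \<longlonglongrightarrow> \<theta> * \<theta> ^ i"
    unfolding ea using tl Suc.IH by (auto intro!: tendsto_mult)
  moreover have "(\<lambda>k. rb \<theta> k (k + Suc i)) \<longlonglongrightarrow> \<theta> * (real i * \<theta> ^ i / \<theta> * (1 - \<theta>)) + \<theta> ^ i * (1 - \<theta>)"
  proof -
    have IHa: "(\<lambda>k. ra \<theta> k (k + i)) \<longlonglongrightarrow> \<theta> ^ i" and IHb: "(\<lambda>k. rb \<theta> k (k + i)) \<longlonglongrightarrow> real i * \<theta> ^ i / \<theta> * (1 - \<theta>)"
      using Suc.IH by auto
    have "(\<lambda>k. tq \<theta> (Suc (k + i)) * rb \<theta> k (k + i) + ra \<theta> k (k + i) * (1 / qint \<theta> (Suc (k + i))))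
       \<longlonglongrightarrow> \<theta> * (real i * \<theta> ^ i / \<theta> * (1 - \<theta>)) + \<theta> ^ i * (1 - \<theta>)"
      by (intro tendsto_add tendsto_mult tl ul IHa IHb)
    then show ?thesis unfolding eb .
  qed
  moreover have "\<theta> * (real i * \<theta> ^ i / \<theta> * (1 - \<theta>)) + \<theta> ^ i * (1 - \<theta>) = real (Suc i) * \<theta> ^ Suc i / \<theta> * (1 - \<theta>)"
    using assms by (simp add: field_simps)
  ultimately show ?case by simp
qed




lemma part1:
  assumes "0 < \<theta>" "\<theta> < 1" "j \<ge> 1"
  shows "(\<lambda>N. P \<theta> N (N - j)) \<longlonglongrightarrow> real j * \<theta> ^ (j - 1) * (1 - \<theta>)"
proof (rule LIMSEQ_offset[of _ j])
  have l: "(\<lambda>k. rb \<theta> k (k + j)) \<longlonglongrightarrow> real j * \<theta> ^ j / \<theta> * (1 - \<theta>)"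
    using limits[OF assms(1,2), of j] by simp
  have e: "real j * \<theta> ^ j / \<theta> * (1 - \<theta>) = real j * \<theta> ^ (j - 1) * (1 - \<theta>)"
    using assms by (cases j) (simp_all add: field_simps)
  have "(\<lambda>n. P \<theta> (n + j) (n + j - j)) = (\<lambda>k. rb \<theta> k (k + j))"
    by (rule ext) (simp add: P_eq rb_def add.commute)
  then show "(\<lambda>n. P \<theta> (n + j) (n + j - j)) \<longlonglongrightarrow> real j * \<theta> ^ (j - 1) * (1 - \<theta>)"
    using l e by simp
qed

lemma part2:
  assumes "0 < \<theta>" "\<theta> < 1"
    and k: "\<forall>N. N \<ge> 1 \<longrightarrow> k N \<le> N - 1"
    and f: "filterlim (\<lambda>N. N - k N) at_top sequentially"
  shows "(\<lambda>N. P \<theta> N (k N)) \<longlonglongrightarrow> 0"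
proof (rule tendsto_sandwich[of "\<lambda>_. 0" _ _ "\<lambda>N. real (N - k N) * \<theta> ^ (N - k N) / \<theta>"])
  have eq: "P \<theta> N (k N) = rb \<theta> (k N) (k N + (N - k N))" if "N \<ge> 1" for N
  proof -
    have "k N \<le> N" using k that by force
    then show ?thesis by (simp add: P_eq rb_def)
  qed
  show "\<forall>\<^sub>F N in sequentially. 0 \<le> P \<theta> N (k N)"
    using eventually_ge_at_top[of 1] by eventually_elim (use eq bounds[OF assms(1,2)] in auto)
  show "\<forall>\<^sub>F N in sequentially. P \<theta> N (k N) \<le> real (N - k N) * \<theta> ^ (N - k N) / \<theta>"
    using eventually_ge_at_top[of 1] by eventually_elim (use eq bounds[OF assms(1,2)] in auto)
  show "(\<lambda>N. 0) \<longlonglongrightarrow> (0::real)" by simp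
  have "(\<lambda>m. real m * \<theta> ^ m / \<theta>) \<longlonglongrightarrow> 0 / \<theta>"
    using powser_times_n_limit_0[of \<theta>] assms by (intro tendsto_divide) auto
  then have "(\<lambda>m. real m * \<theta> ^ m / \<theta>) \<longlonglongrightarrow> 0" by simp
  then show "(\<lambda>N. real (N - k N) * \<theta> ^ (N - k N) / \<theta>) \<longlonglongrightarrow> 0"
    using filterlim_compose[OF _ f] by blast
qed

lemma part3:
  assumes "0 < \<theta>" "\<theta> < 1"
  shows "let g = (\<lambda>x::real. x * \<theta> powr (x - 1) * (1 - \<theta>));
             js = max (- 1 / ln \<theta>) 1
         in (\<forall>x\<ge>1. g x \<le> g js) \<and>
            (1 / exp 1 < \<theta> \<longrightarrow> g js = exp (- 1) * ((\<theta> - 1) / (\<theta> * ln \<theta>)))"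
proof -
  define c where "c = - ln \<theta>"
  have c0: "0 < c" unfolding c_def using assms by simp
  have pw: "\<theta> powr y = exp (- c * y)" for y
    unfolding c_def powr_def using assms by (simp add: mult.commute)
  have js: "- 1 / ln \<theta> = 1 / c" unfolding c_def by simp
  define g where "g = (\<lambda>x::real. x * \<theta> powr (x - 1) * (1 - \<theta>))"
  define js where "js = max (1 / c) 1"
  have key: "x * exp (- c * (x - 1)) \<le> js * exp (- c * (js - 1))" if x: "x \<ge> 1" for x
  proof (cases "1 / c \<ge> 1")
    case True
    then have j: "js = 1 / c" unfolding js_def by simp
    have "c * x \<le> exp (c * x - 1)" using exp_ge_add_one_self[of "c * x - 1"] by simp
    then have "c * x * exp (c - c * x) \<le> exp (c * x - 1) * exp (c - c * x)"
      by (intro mult_right_mono) auto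
    also have "\<dots> = exp (c - 1)" by (simp flip: exp_add)
    finally have "c * (x * exp (- c * (x - 1))) \<le> c * (1 / c * exp (- c * (1 / c - 1)))"
      using c0 by (simp add: algebra_simps)
    then have "x * exp (- c * (x - 1)) \<le> 1 / c * exp (- c * (1 / c - 1))"
      by (rule mult_left_le_imp_le) (rule c0)
    then show ?thesis unfolding j .
  next
    case False
    then have j: "js = 1" unfolding js_def by simp
    have c1: "1 < c" using False c0 by (simp add: field_simps)
    have "1 * (x - 1) \<le> c * (x - 1)" using c1 x by (intro mult_right_mono) auto
    then have "x \<le> 1 + c * (x - 1)" by simp
    also have "\<dots> \<le> exp (c * (x - 1))" by (rule exp_ge_add_one_self)
    finally have "x * exp (- c * (x - 1)) \<le> exp (c * (x - 1)) * exp (- c * (x - 1))"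
      by (intro mult_right_mono) auto
    also have "\<dots> = 1" by (simp flip: exp_add)
    finally show ?thesis unfolding j by simp
  qed
  have A: "\<forall>x\<ge>1. g x \<le> g js"
  proof (intro allI impI)
    fix x :: real assume "x \<ge> 1"
    then show "g x \<le> g js" unfolding g_def pw using key[of x] assms
      by (intro mult_right_mono) auto
  qed
  have B: "g js = exp (- 1) * ((\<theta> - 1) / (\<theta> * ln \<theta>))" if t: "1 / exp 1 < \<theta>"
  proof -
    have "ln (1 / exp 1) < ln \<theta>" using t assms by (subst ln_less_cancel_iff) auto
    moreover have "ln (1 / exp 1) = (-1::real)" by (simp add: ln_div)
    ultimately have "c < 1" unfolding c_def by simp
    then have j: "js = 1 / c" unfolding js_def using c0 by (simp add: field_simps)
    have "g js = 1 / c * exp (- c * (1 / c - 1)) * (1 - \<theta>)" unfolding g_def pw j ..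
    also have "exp (- c * (1 / c - 1)) = exp (- 1) * exp c" using c0 by (simp add: algebra_simps flip: exp_add)
    also have "exp c = 1 / \<theta>" unfolding c_def using assms by (simp add: exp_minus inverse_eq_divide)
    finally show ?thesis unfolding c_def using assms by (simp add: field_simps)
  qed
  show ?thesis unfolding Let_def using A B unfolding g_def js_def js by simp
qed


theorem theorem6p5:
  fixes \<theta> :: real
  assumes "0 < \<theta>" and "\<theta> < 1"
  shows "(\<forall>j::nat. j \<ge> 1 \<longrightarrow>
            (\<lambda>N. P \<theta> N (N - j)) \<longlonglongrightarrow> real j * \<theta> ^ (j - 1) * (1 - \<theta>))
     \<and> (\<forall>k :: nat \<Rightarrow> nat. (\<forall>N. N \<ge> 1 \<longrightarrow> k N \<le> N - 1) \<longrightarrow>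
            filterlim (\<lambda>N. N - k N) at_top sequentially \<longrightarrow>
            (\<lambda>N. P \<theta> N (k N)) \<longlonglongrightarrow> 0)
     \<and> (let g = (\<lambda>x::real. x * \<theta> powr (x - 1) * (1 - \<theta>));
             js = max (- 1 / ln \<theta>) 1
         in (\<forall>x\<ge>1. g x \<le> g js) \<and>
            (1 / exp 1 < \<theta> \<longrightarrow> g js = exp (- 1) * ((\<theta> - 1) / (\<theta> * ln \<theta>))))"
proof -
  have 1: "\<forall>j::nat. j \<ge> 1 \<longrightarrow>
            (\<lambda>N. P \<theta> N (N - j)) \<longlonglongrightarrow> real j * \<theta> ^ (j - 1) * (1 - \<theta>)"
    using part1[OF assms] by blast
  have 2: "\<forall>k :: nat \<Rightarrow> nat. (\<forall>N. N \<ge> 1 \<longrightarrow> k N \<le> N - 1) \<longrightarrow>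
            filterlim (\<lambda>N. N - k N) at_top sequentially \<longrightarrow>
            (\<lambda>N. P \<theta> N (k N)) \<longlonglongrightarrow> 0"
    using part2[OF assms] by blast
  show ?thesis using 1 2 part3[OF assms] by blast
qed

end
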